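(* Let $\mathcal{M}=(\Sigma,\Gamma,\mathcal{H},U,M)$ be a QMM, let $n=\dim\mathcal{H}$, and let $\rho_s,\rho_t$ be density operators on $\mathcal{H}$. Then: (1) $\rho_s\sim\rho_t \iff \rho_s\sim^{n^2-1}\rho_t \iff \rho_s\sim_{n^2-1}\rho_t$; (2) for every $k\in\mathbb{N}$, $\rho_s\sim_k\rho_t \iff \rho_s\sim_k^{n^2-1}\rho_t$.
   Context: A quantum Mealy machine (QMM) is a tuple $\mathcal{M}=(\Sigma,\Gamma,\mathcal{H},U,M)$ where $\Sigma$ (inputs) and $\Gamma$ (outputs) are finite alphabets, $\mathcal{H}$ is a finite-dimensional complex Hilbert space, $U=\{U_\sigma:\sigma\in\Sigma\}$ is a family of unitary operators on $\mathcal{H}$, and $M=\{M_\gamma:\gamma\in\Gamma\}$ is a family of linear operators on $\mathcal{H}$ with $\sum_{\gamma}M_\gamma^\dagger M_\gamma=I$. For a word $a$, $|a|$ is its length, $a[i]$ its $i$-th letter (1-indexed), $a[l:r]=a[l]\cdots a[r]$ (empty word $\epsilon$ if $l>r$), and $U_a=U_{a[|a|]}\cdots U_{a[1]}$, $U_\epsilon=I$. A scheduler for $a\in\Sigma^*$ is a finite non-decreasing sequence $\mathcal{S}=(s_1\le\dots\le s_{|\mathcal{S}|})$ of integers with $0\le s_1$ and $s_{|\mathcal{S}|}\le|a|$ (possibly empty). With $s_0=0$, $s_{|\mathcal{S}|+1}=|a|$, set $a_i=a[s_{i-1}+1:s_i]$ for $1\le i\le|\mathcal{S}|+1$. For $b=b_1\cdots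 b_{|\mathcal{S}|}\in\Gamma^{|\mathcal{S}|}$ let $V_{b|a,\mathcal{S}}=U_{a_{|\mathcal{S}|+1}}M_{b_{|\mathcal{S}|}}U_{a_{|\mathcal{S}|}}\cdots M_{b_1}U_{a_1}$, and for an operator $\rho$ let $\rho^{\mathcal{M}}_{b|a,\mathcal{S}}=V_{b|a,\mathcal{S}}\rho V_{b|a,\mathcal{S}}^\dagger$. For a density operator $\rho$, $\Pr^{\mathcal{M}}_\rho(b|a,\mathcal{S})=\operatorname{tr}(\rho^{\mathcal{M}}_{b|a,\mathcal{S}})$. Two density operators $\rho_s,\rho_t$ are: equivalent ($\rho_s\sim\rho_t$) if $\Pr^{\mathcal{M}}_{\rho_s}(b|a,\mathcal{S})=\Pr^{\mathcal{M}}_{\rho_t}(b|a,\mathcal{S})$ for all $a\in\Sigma^*$, schedulers $\mathcal{S}$ for $a$ and $b\in\Gamma^{|\mathcal{S}|}$; equivalent up to $k$ measurements ($\rho_s\sim_k\rho_t$) if this holds for all such triples with $|\mathcal{S}|\le k$; $m$-equivalent ($\rho_s\sim^m\rho_t$) if it holds for all triples with $|a|+|\mathcal{S}|\le m$; and $m$-equivalent up to $k$ measurements ($\rho_s\sim^m_k\rho_t$) if it holds for all triples with $|\mathcal{S}|\le k$ and $|a|+|\mathcal{S}|\le m$. *)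

theory Defs
  imports "HOL-Analysis.Analysis"
begin

text \<open>Operators on an n-dimensional complex Hilbert space H = complex^'n are
  represented as matrices complex^'n^'n, where n = CARD('n).\<close>

type_synonym 'n op = "complex^'n^'n"

definition cadj :: "'n::finite op \<Rightarrow> 'n op" where
  "cadj A = (\<chi> i j. cnj (A $ j $ i))"

definition mtrace :: "'n::finite op \<Rightarrow> complex" where
  "mtrace A = (\<Sum>i\<in>UNIV. A $ i $ i)"

definition unitary_op :: "'n::finite op \<Rightarrow> bool" where
  "unitary_op A \<longleftrightarrow> cadj A ** A = mat 1 \<and> A ** cadj A = mat 1"

definition cinner :: "complex^'n::finite \<Rightarrow> complex^'n \<Rightarrow> complex" where
  "cinner x y = (\<Sum>i\<in>UNIV. cnj (x $ i) * y $ i)"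

definition density_op :: "'n::finite op \<Rightarrow> bool" where
  "density_op \<rho> \<longleftrightarrow> cadj \<rho> = \<rho> \<and> (\<forall>x. 0 \<le> Re (cinner x (\<rho> *v x)) \<and> Im (cinner x (\<rho> *v x)) = 0)
     \<and> mtrace \<rho> = 1"

definition qmm :: "('i::finite \<Rightarrow> 'n::finite op) \<Rightarrow> ('o::finite \<Rightarrow> 'n op) \<Rightarrow> bool" where
  "qmm U M \<longleftrightarrow> (\<forall>\<sigma>. unitary_op (U \<sigma>)) \<and> (\<Sum>\<gamma>\<in>UNIV. cadj (M \<gamma>) ** M \<gamma>) = mat 1"

text \<open>U_w = U_{w[|w|]} ... U_{w[1]}, U_eps = I.\<close>
definition Uword :: "('i \<Rightarrow> 'n::finite op) \<Rightarrow> 'i list \<Rightarrow> 'n op" where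
  "Uword U w = foldl (\<lambda>A \<sigma>. U \<sigma> ** A) (mat 1) w"

definition scheduler :: "'i list \<Rightarrow> nat list \<Rightarrow> bool" where
  "scheduler a S \<longleftrightarrow> sorted S \<and> (\<forall>s\<in>set S. s \<le> length a)"

text \<open>Vop U M a S b p: the operator for the remaining segments, where p is the
  previous cut point s_{i-1}; segments a_i = a[s_{i-1}+1 : s_i].
  V_{b|a,S} = Vop U M a S b 0 (for length b = length S).\<close>
fun Vop :: "('i \<Rightarrow> 'n::finite op) \<Rightarrow> ('o \<Rightarrow> 'n op) \<Rightarrow> 'i list \<Rightarrow> nat list \<Rightarrow> 'o list \<Rightarrow> nat \<Rightarrow> 'n op" where
  "Vop U M a [] [] p = Uword U (drop p a)"
| "Vop U M a (s # S) (g # b) p = Vop U M a S b s ** M g ** Uword U (drop p (take s a))"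
| "Vop U M a _ _ p = 0"

definition Vmap :: "('i \<Rightarrow> 'n::finite op) \<Rightarrow> ('o \<Rightarrow> 'n op) \<Rightarrow> 'i list \<Rightarrow> nat list \<Rightarrow> 'o list \<Rightarrow> 'n op" where
  "Vmap U M a S b = Vop U M a S b 0"

definition Prob :: "('i \<Rightarrow> 'n::finite op) \<Rightarrow> ('o \<Rightarrow> 'n op) \<Rightarrow> 'n op \<Rightarrow> 'o list \<Rightarrow> 'i list \<Rightarrow> nat list \<Rightarrow> complex" where
  "Prob U M \<rho> b a S = mtrace (Vmap U M a S b ** \<rho> ** cadj (Vmap U M a S b))"

definition equiv_on :: "('i \<Rightarrow> 'n::finite op) \<Rightarrow> ('o \<Rightarrow> 'n op) \<Rightarrow> ('i list \<Rightarrow> nat list \<Rightarrow> bool) \<Rightarrow> 'n op \<Rightarrow> 'n op \<Rightarrow> bool" where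
  "equiv_on U M P \<rho>s \<rho>t \<longleftrightarrow> (\<forall>a S b. scheduler a S \<longrightarrow> length b = length S \<longrightarrow> P a S \<longrightarrow>
      Prob U M \<rho>s b a S = Prob U M \<rho>t b a S)"

definition qequiv where "qequiv U M = equiv_on U M (\<lambda>a S. True)"
definition qequiv_k where "qequiv_k U M k = equiv_on U M (\<lambda>a S. length S \<le> k)"
definition qequiv_m where "qequiv_m U M m = equiv_on U M (\<lambda>a S. length a + length S \<le> m)"
definition qequiv_mk where "qequiv_mk U M m k =
  equiv_on U M (\<lambda>a S. length S \<le> k \<and> length a + length S \<le> m)"

end

theory Submission
  imports Defs
begin


lemma cadj_mult: "cadj (A ** B) = cadj B ** cadj (A::'n::finite op)"
  by (simp add: cadj_def matrix_matrix_mult_def vec_eq_iff mult.commute)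

lemma cadj_one: "cadj (mat 1 :: 'n::finite op) = mat 1"
  by (simp add: cadj_def mat_def vec_eq_iff)

lemma Uword_foldl: "foldl (\<lambda>A \<sigma>. U \<sigma> ** A) B w = Uword U w ** (B::'n::finite op)"
proof (induction w arbitrary: B)
  case Nil then show ?case by (simp add: Uword_def)
next
  case (Cons x w)
  have "Uword U (x # w) = Uword U w ** U x"
    using Cons.IH[of "U x ** mat 1"] by (simp add: Uword_def)
  then show ?case using Cons.IH[of "U x ** B"] by (simp add: matrix_mul_assoc)
qed

lemma Uword_Cons: "Uword U (x # w) = Uword U w ** (U x :: 'n::finite op)"
  using Uword_foldl[of U "U x ** mat 1" w] by (simp add: Uword_def)

lemma Vop_shift: "Vop U M (\<sigma> # a) (map Suc S) b (Suc p) = Vop U M a S b (p::nat)"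
proof (induction S arbitrary: b p)
  case Nil then show ?case by (cases b) simp_all
next
  case (Cons s S) then show ?case by (cases b) simp_all
qed

lemma Vmap_Cons: "Vmap U M (\<sigma> # a) (map Suc S) b = Vmap U M a S b ** U \<sigma>"
proof (cases S)
  case Nil then show ?thesis by (cases b) (simp_all add: Vmap_def Uword_Cons)
next
  case (Cons s S') then show ?thesis
    by (cases b) (simp_all add: Vmap_def Uword_Cons Vop_shift matrix_mul_assoc)
qed

lemma Vmap_meas: "Vmap U M a (0 # S) (g # b) = Vmap U M a S b ** M g"
  by (simp add: Vmap_def Uword_def)



definition Ef where "Ef U M a S b = cadj (Vmap U M a S b) ** Vmap U M a S b"
definition Eff where "Eff U M j l = {Ef U M a S b | a S b. scheduler a S \<and> length b = length S \<and> length S \<le> j \<and> length a + length S \<le> l}"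
definition CJ where "CJ A X = cadj A ** X ** (A::'n::finite op)"
definition G where "G U M j A B = insert (mat 1) ((\<Union>\<sigma>. CJ (U \<sigma>) ` A) \<union> (if j = 0 then {} else \<Union>g. CJ (M g) ` B))"

lemma Ef_Cons: "Ef U M (\<sigma>#a) (map Suc S) b = CJ (U \<sigma>) (Ef U M a S b)"
  by (simp add: Ef_def CJ_def Vmap_Cons cadj_mult matrix_mul_assoc)

lemma Ef_meas: "Ef U M a (0#S) (g#b) = CJ (M g) (Ef U M a S b)"
  by (simp add: Ef_def CJ_def Vmap_meas cadj_mult matrix_mul_assoc)

lemma Ef_nil: "Ef U M [] [] [] = mat 1"
  by (simp add: Ef_def Vmap_def Uword_def cadj_one)

lemma sched_Cons: "scheduler (\<sigma>#a) (map Suc S) \<longleftrightarrow> scheduler a S"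
  by (simp add: scheduler_def sorted_map)

lemma sched_meas: "scheduler a (0#S) \<longleftrightarrow> scheduler a S"
  by (simp add: scheduler_def)

lemma decomp:
  assumes "scheduler a S" "length b = length S"
  shows "(a=[] \<and> S=[] \<and> b=[]) \<or> (\<exists>S' g b'. S = 0#S' \<and> b = g#b') \<or> (\<exists>\<sigma> a' S'. a = \<sigma>#a' \<and> S = map Suc S')"
proof (cases S)
  case Nil then show ?thesis using assms by (cases a) auto
next
  case (Cons s S'')
  show ?thesis
  proof (cases s)
    case 0 then show ?thesis using assms Cons by (cases b) auto
  next
    case (Suc s')
    have pos: "\<forall>x\<in>set S. x \<ge> 1" using assms(1) Cons Suc by (auto simp: scheduler_def)
    have Seq: "S = map Suc (map (\<lambda>x. x - 1) S)" using pos by (induction S) auto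
    have "a \<noteq> []" using assms(1) Cons Suc by (auto simp: scheduler_def)
    then obtain \<sigma> a' where "a = \<sigma>#a'" by (cases a) auto
    then show ?thesis using Seq by blast
  qed
qed

lemma Eff_Suc: "Eff U M j (Suc l) = G U M j (Eff U M j l) (Eff U M (j - 1) l)"
proof
  show "Eff U M j (Suc l) \<subseteq> G U M j (Eff U M j l) (Eff U M (j - 1) l)"
  proof
    fix E assume "E \<in> Eff U M j (Suc l)"
    then obtain a S b where E: "E = Ef U M a S b" and h: "scheduler a S" "length b = length S"
      "length S \<le> j" "length a + length S \<le> Suc l" by (auto simp: Eff_def)
    from decomp[OF h(1,2)] show "E \<in> G U M j (Eff U M j l) (Eff U M (j - 1) l)"
    proof (elim disjE exE conjE)
      assume "a = []" "S = []" "b = []" then show ?thesis using E by (simp add: G_def Ef_nil)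
    next
      fix S' g b' assume S: "S = 0 # S'" and b: "b = g # b'"
      have "Ef U M a S' b' \<in> Eff U M (j - 1) l"
        using h S b sched_meas unfolding Eff_def by fastforce
      moreover have "j \<noteq> 0" using h S by auto
      ultimately show ?thesis using E S b by (auto simp: G_def Ef_meas)
    next
      fix \<sigma> a' S' assume a: "a = \<sigma> # a'" and S: "S = map Suc S'"
      have "Ef U M a' S' b \<in> Eff U M j l"
        using h a S sched_Cons unfolding Eff_def by fastforce
      then show ?thesis using E a S by (auto simp: G_def Ef_Cons)
    qed
  qed
next
  show "G U M j (Eff U M j l) (Eff U M (j - 1) l) \<subseteq> Eff U M j (Suc l)"
  proof
    fix E assume "E \<in> G U M j (Eff U M j l) (Eff U M (j - 1) l)"
    then consider "E = mat 1" | \<sigma> X where "X \<in> Eff U M j l" "E = CJ (U \<sigma>) X"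
      | g X where "j \<noteq> 0" "X \<in> Eff U M (j - 1) l" "E = CJ (M g) X"
      by (auto simp: G_def split: if_splits)
    then show "E \<in> Eff U M j (Suc l)"
    proof cases
      case 1 then show ?thesis unfolding Eff_def
        by (rule_tac CollectI, rule_tac x="[]" in exI, rule_tac x="[]" in exI, rule_tac x="[]" in exI)
          (simp add: Ef_nil scheduler_def)
    next
      case (2 \<sigma> X)
      then obtain a S b where X: "X = Ef U M a S b" and h: "scheduler a S" "length b = length S"
        "length S \<le> j" "length a + length S \<le> l" by (auto simp: Eff_def)
      show ?thesis unfolding Eff_def using h 2 X
        by (rule_tac CollectI, rule_tac x="\<sigma>#a" in exI, rule_tac x="map Suc S" in exI, rule_tac x="b" in exI)
          (simp add: Ef_Cons sched_Cons)
    next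
      case (3 g X)
      then obtain a S b where X: "X = Ef U M a S b" and h: "scheduler a S" "length b = length S"
        "length S \<le> j - 1" "length a + length S \<le> l" by (auto simp: Eff_def)
      show ?thesis unfolding Eff_def using h 3 X
        by (rule_tac CollectI, rule_tac x="a" in exI, rule_tac x="0#S" in exI, rule_tac x="g#b" in exI)
          (simp add: Ef_meas sched_meas)
    qed
  qed
qed



lemma mm_scaleR_l: "(r *\<^sub>R X) ** A = r *\<^sub>R (X ** (A::'n::finite op))"
  by (simp add: matrix_matrix_mult_def vec_eq_iff scaleR_sum_right)
lemma mm_scaleR_r: "A ** (r *\<^sub>R X) = r *\<^sub>R (A ** (X::'n::finite op))"
  by (simp add: matrix_matrix_mult_def vec_eq_iff scaleR_sum_right)

lemma CJ_linear: "linear (CJ (A::'n::finite op))"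
proof (rule linearI)
  fix X Y :: "'n op"
  show "CJ A (X + Y) = CJ A X + CJ A Y"
    by (simp add: CJ_def matrix_matrix_mult_def vec_eq_iff algebra_simps sum.distrib)
next
  fix r :: real and X :: "'n op"
  show "CJ A (r *\<^sub>R X) = r *\<^sub>R CJ A X"
    by (simp add: CJ_def mm_scaleR_l mm_scaleR_r)
qed

lemma G_mono: "A \<subseteq> A' \<Longrightarrow> B \<subseteq> B' \<Longrightarrow> G U M j A B \<subseteq> G U M j A' B'"
  unfolding G_def by (cases "j = 0") (simp_all, blast+)

lemma span_G: "span (G U M j A B) = span (G U M j (span A) (span B))"
proof
  show "span (G U M j A B) \<subseteq> span (G U M j (span A) (span B))"
    by (rule span_mono, rule G_mono) (simp_all add: span_superset)
next
  have "G U M j (span A) (span B) \<subseteq> span (G U M j A B)"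
  proof
    fix x assume "x \<in> G U M j (span A) (span B)"
    then consider "x = mat 1" | \<sigma> X where "X \<in> span A" "x = CJ (U \<sigma>) X"
      | g X where "j \<noteq> 0" "X \<in> span B" "x = CJ (M g) X"
      by (auto simp: G_def split: if_splits)
    then show "x \<in> span (G U M j A B)"
    proof cases
      case 1 then show ?thesis by (simp add: G_def span_base)
    next
      case (2 \<sigma> X)
      have "x \<in> span (CJ (U \<sigma>) ` A)" using 2 span_linear_image[OF CJ_linear] by blast
      moreover have "CJ (U \<sigma>) ` A \<subseteq> G U M j A B" by (auto simp: G_def)
      ultimately show ?thesis by (meson span_mono subsetD)
    next
      case (3 g X)
      have "x \<in> span (CJ (M g) ` B)" using 3 span_linear_image[OF CJ_linear] by blast
      moreover have "CJ (M g) ` B \<subseteq> G U M j A B" using 3 by (auto simp: G_def)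
      ultimately show ?thesis by (meson span_mono subsetD)
    qed
  qed
  then show "span (G U M j (span A) (span B)) \<subseteq> span (G U M j A B)"
    by (simp add: span_minimal)
qed

lemma span_G_cong:
  assumes "span A = span A'" "j \<noteq> 0 \<Longrightarrow> span B = span B'"
  shows "span (G U M j A B) = span (G U M j A' B')"
proof (cases "j = 0")
  case True
  then have "G U M j (span A) (span B) = G U M j (span A') (span B')"
    using assms by (simp add: G_def)
  then show ?thesis by (metis span_G)
next
  case False
  then show ?thesis using assms by (metis span_G)
qed


lemma cadj_cadj: "cadj (cadj A) = (A::'n::finite op)"
  by (simp add: cadj_def vec_eq_iff)

lemma herm_subspace: "subspace {X::'n::finite op. cadj X = X}"
  unfolding subspace_def cadj_def
  by (simp add: vec_eq_iff)

lemma Ef_herm: "cadj (Ef U M a S b) = Ef U M a S b"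
  by (simp add: Ef_def cadj_mult cadj_cadj)

lemma Eff_herm: "span (Eff U M j l) \<subseteq> {X. cadj X = X}"
  by (rule span_minimal[OF _ herm_subspace]) (auto simp: Eff_def Ef_herm)

definition phi :: "'n::finite op \<Rightarrow> real^'n^'n" where
  "phi X = (\<chi> i j. Re (X$i$j) + Im (X$i$j))"

lemma phi_linear: "linear phi"
  by (rule linearI) (simp_all add: phi_def vec_eq_iff distrib_left)

lemma phi_inj:
  assumes "cadj X = X" "cadj Y = Y" "phi X = phi Y"
  shows "X = (Y::'n::finite op)"
proof -
  have hX: "X$j$i = cnj (X$i$j)" for i j
    using arg_cong[OF assms(1), of "\<lambda>A. A$j$i"] by (simp add: cadj_def)
  have hY: "Y$j$i = cnj (Y$i$j)" for i j
    using arg_cong[OF assms(2), of "\<lambda>A. A$j$i"] by (simp add: cadj_def)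
  have p: "Re (X$i$j) + Im (X$i$j) = Re (Y$i$j) + Im (Y$i$j)" for i j
    using arg_cong[OF assms(3), of "\<lambda>A. A$i$j"] by (simp add: phi_def)
  have "X$i$j = Y$i$j" for i j
  proof -
    have "Re (X$j$i) + Im (X$j$i) = Re (Y$j$i) + Im (Y$j$i)" by (rule p)
    then have "Re (X$i$j) - Im (X$i$j) = Re (Y$i$j) - Im (Y$i$j)"
      unfolding hX[of j i] hY[of j i] by simp
    with p[of i j] show ?thesis by (simp add: complex_eq_iff)
  qed
  then show ?thesis by (simp add: vec_eq_iff)
qed

definition dd where "dd W = dim (phi ` W)"

lemma dd_bound: "dd W \<le> CARD('n) * CARD('n)"
  for W :: "'n::finite op set"
  using dim_subset_UNIV[of "phi ` W"] by (simp add: dd_def)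

lemma dd_mono: "W \<subseteq> W' \<Longrightarrow> dd W \<le> dd W'"
  unfolding dd_def by (intro dim_subset image_mono)

lemma dd_strict:
  fixes S T :: "'n::finite op set"
  assumes "span S \<subseteq> span T" "span S \<noteq> span T" "span T \<subseteq> {X. cadj X = X}"
  shows "dd (span S) < dd (span T)"
proof -
  have "phi ` span S \<subseteq> phi ` span T" using assms(1) by auto
  moreover have "phi ` span S \<noteq> phi ` span T"
  proof
    assume e: "phi ` span S = phi ` span T"
    from assms(1,2) obtain x where x: "x \<in> span T" "x \<notin> span S" by auto
    then obtain y where y: "y \<in> span S" "phi y = phi x" using e by (metis imageE imageI)
    have "y = x" using phi_inj[of y x] y x assms by auto
    then show False using x y by simp
  qed
  moreover have e1: "span (phi ` span S) = phi ` span S"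
    by (metis span_linear_image[OF phi_linear] span_span)
  moreover have e2: "span (phi ` span T) = phi ` span T"
    by (metis span_linear_image[OF phi_linear] span_span)
  ultimately have "span (phi ` span S) \<subset> span (phi ` span T)"
    by (simp only: psubset_eq) simp
  then show ?thesis unfolding dd_def by (rule dim_psubset)
qed

lemma phi_one_ne: "phi (mat 1 :: 'n::finite op) \<noteq> 0"
proof
  assume "phi (mat 1 :: 'n op) = 0"
  then have "(phi (mat 1 :: 'n op))$undefined$undefined = 0" by simp
  moreover have "(phi (mat 1 :: 'n op))$undefined$undefined = 1" by (simp add: phi_def mat_def)
  ultimately show False by simp
qed



lemma stable_from:
  assumes prp: "\<And>l. l \<ge> t \<Longrightarrow> W l = W (Suc l) \<Longrightarrow> W (Suc l) = W (Suc (Suc l))"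
    and "l \<ge> t" "W l = W (Suc l)"
  shows "\<forall>m\<ge>l. W m = W l"
proof -
  have s: "W (l + i) = W (Suc (l + i))" for i
  proof (induction i)
    case 0 then show ?case using assms by simp
  next
    case (Suc i)
    have "l + i \<ge> t" using assms(2) by simp
    from prp[OF this Suc.IH] show ?case by simp
  qed
  have "W (l + i) = W l" for i
  proof (induction i)
    case 0 then show ?case by simp
  next
    case (Suc i) then show ?case using s[of i] by simp
  qed
  then show ?thesis by (metis le_add_diff_inverse)
qed

lemma chain:
  fixes W :: "nat \<Rightarrow> 'v set" and d :: "nat \<Rightarrow> nat"
  assumes strict: "\<And>l. W l \<noteq> W (Suc l) \<Longrightarrow> d l < d (Suc l)"
    and bound: "\<And>l. d l \<le> D"
    and prp: "\<And>l. l \<ge> t \<Longrightarrow> W l = W (Suc l) \<Longrightarrow> W (Suc l) = W (Suc (Suc l))"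
    and base: "t + 1 \<le> d t"
  shows "\<exists>\<tau>. (\<forall>m\<ge>\<tau>. W m = W \<tau>) \<and> \<tau> + 1 \<le> d \<tau>"
proof -
  have P: "(\<exists>\<tau>. (\<forall>m\<ge>\<tau>. W m = W \<tau>) \<and> \<tau> + 1 \<le> d \<tau>) \<or> t + k + 1 \<le> d (t + k)" for k
  proof (induction k)
    case 0 then show ?case using base by simp
  next
    case (Suc k)
    show ?case
    proof (cases "W (t + k) = W (Suc (t + k))")
      case True
      have "\<forall>m\<ge>t+k. W m = W (t+k)" 
        by (rule stable_from[of t W "t+k", OF prp]) (use True in simp_all)
      then show ?thesis using Suc.IH by blast
    next
      case False
      then show ?thesis using Suc.IH strict[OF False] by auto
    qed
  qed
  from P[of D] bound[of "t + D"] show ?thesis by auto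
qed



lemma Eff_mono: "j \<le> j' \<Longrightarrow> l \<le> l' \<Longrightarrow> Eff U M j l \<subseteq> Eff U M j' l'"
  unfolding Eff_def by (fastforce intro: le_trans)

lemma one_in: "mat 1 \<in> Eff U M j l"
  unfolding Eff_def
  by (rule CollectI, rule_tac x="[]" in exI, rule_tac x="[]" in exI, rule_tac x="[]" in exI)
     (simp add: Ef_nil scheduler_def)

lemma stab_step:
  fixes U :: "'i \<Rightarrow> 'n::finite op"
  assumes low: "\<And>m. m \<ge> t \<Longrightarrow> j \<noteq> 0 \<Longrightarrow> span (Eff U M (j-1) m) = span (Eff U M (j-1) t)"
    and base: "t + 1 \<le> dd (span (Eff U M j t))"
  shows "\<exists>\<tau>. (\<forall>m\<ge>\<tau>. span (Eff U M j m) = span (Eff U M j \<tau>)) \<and> \<tau> + 1 \<le> dd (span (Eff U M j \<tau>))"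
proof (rule chain[where d = "\<lambda>l. dd (span (Eff U M j l))" and D = "CARD('n) * CARD('n)" and t = t])
  fix l
  assume ne: "span (Eff U M j l) \<noteq> span (Eff U M j (Suc l))"
  show "dd (span (Eff U M j l)) < dd (span (Eff U M j (Suc l)))"
    by (rule dd_strict[OF span_mono[OF Eff_mono] ne Eff_herm]) simp_all
next
  fix l show "dd (span (Eff U M j l)) \<le> CARD('n) * CARD('n)" by (rule dd_bound)
next
  fix l assume lt: "t \<le> l" and eq: "span (Eff U M j l) = span (Eff U M j (Suc l))"
  have "span (Eff U M j (Suc (Suc l))) = span (G U M j (Eff U M j (Suc l)) (Eff U M (j - 1) (Suc l)))"
    by (simp only: Eff_Suc)
  also have "\<dots> = span (G U M j (Eff U M j l) (Eff U M (j - 1) l))"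
  proof (rule span_G_cong)
    show "span (Eff U M j (Suc l)) = span (Eff U M j l)" using eq by simp
    assume "j \<noteq> 0"
    then show "span (Eff U M (j - 1) (Suc l)) = span (Eff U M (j - 1) l)"
      using low[of "Suc l"] low[of l] lt by simp
  qed
  also have "\<dots> = span (Eff U M j (Suc l))" by (simp only: Eff_Suc)
  finally show "span (Eff U M j (Suc l)) = span (Eff U M j (Suc (Suc l)))" by simp
next
  show "t + 1 \<le> dd (span (Eff U M j t))" by (rule base)
qed

lemma dd_pos: "1 \<le> dd (span (Eff U M j l))"
  for U :: "'i \<Rightarrow> 'n::finite op"
proof -
  have "dd {mat 1 :: 'n op} \<le> dd (span (Eff U M j l))"
    by (rule dd_mono) (simp add: one_in span_base)
  moreover have "dd {mat 1 :: 'n op} = 1" using phi_one_ne by (simp add: dd_def)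
  ultimately show ?thesis by simp
qed

lemma stab:
  fixes U :: "'i \<Rightarrow> 'n::finite op"
  shows "\<exists>\<tau>. (\<forall>m\<ge>\<tau>. span (Eff U M j m) = span (Eff U M j \<tau>)) \<and> \<tau> + 1 \<le> dd (span (Eff U M j \<tau>))"
proof (induction j)
  case 0
  show ?case
  proof (rule stab_step[where t = 0])
    show "0 + 1 \<le> dd (span (Eff U M 0 0))" using dd_pos[of U M 0 0] by simp
  qed simp
next
  case (Suc j)
  then obtain \<tau> where t: "\<forall>m\<ge>\<tau>. span (Eff U M j m) = span (Eff U M j \<tau>)"
    "\<tau> + 1 \<le> dd (span (Eff U M j \<tau>))" by blast
  have "dd (span (Eff U M j \<tau>)) \<le> dd (span (Eff U M (Suc j) \<tau>))"
    by (rule dd_mono, rule span_mono, rule Eff_mono) simp_all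
  show ?case
  proof (rule stab_step[where t = \<tau>])
    fix m assume "\<tau> \<le> m"
    then show "span (Eff U M (Suc j - 1) m) = span (Eff U M (Suc j - 1) \<tau>)"
      unfolding diff_Suc_1 using t(1) by blast
  next
    show "\<tau> + 1 \<le> dd (span (Eff U M (Suc j) \<tau>))" using t(2) \<open>dd _ \<le> _\<close> by linarith
  qed
qed

lemma stab_N:
  fixes U :: "'i \<Rightarrow> 'n::finite op"
  shows "Eff U M j l \<subseteq> span (Eff U M j (CARD('n)^2 - 1))"
proof -
  obtain \<tau> where t: "\<forall>m\<ge>\<tau>. span (Eff U M j m) = span (Eff U M j \<tau>)"
    "\<tau> + 1 \<le> dd (span (Eff U M j \<tau>))" using stab by blast
  have "\<tau> + 1 \<le> CARD('n) * CARD('n)" using t(2) dd_bound[of "span (Eff U M j \<tau>)"] by linarith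
  then have tN: "\<tau> \<le> CARD('n)^2 - 1" by (simp add: power2_eq_square)
  show ?thesis
  proof (cases "l \<le> CARD('n)^2 - 1")
    case True
    then show ?thesis using Eff_mono[of j j l] span_superset by blast
  next
    case False
    then have "span (Eff U M j l) = span (Eff U M j (CARD('n)^2 - 1))"
      using t(1) tN False by (metis nat_le_linear order_trans)
    then show ?thesis using span_superset by blast
  qed
qed



lemma mtrace_comm: "mtrace (A ** B) = mtrace (B ** (A::'n::finite op))"
  unfolding mtrace_def matrix_matrix_mult_def
  apply simp
  apply (subst sum.swap)
  apply (simp add: mult.commute)
  done

lemma Prob_Ef: "Prob U M \<rho> b a S = mtrace (Ef U M a S b ** \<rho>)"
proof -
  let ?V = "Vmap U M a S b"
  have "Prob U M \<rho> b a S = mtrace ((?V ** \<rho>) ** cadj ?V)" by (simp add: Prob_def)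
  also have "\<dots> = mtrace (cadj ?V ** (?V ** \<rho>))" by (rule mtrace_comm)
  also have "\<dots> = mtrace (Ef U M a S b ** \<rho>)" by (simp add: Ef_def matrix_mul_assoc)
  finally show ?thesis .
qed

definition K :: "'n::finite op \<Rightarrow> 'n op \<Rightarrow> 'n op set" where
  "K \<rho>s \<rho>t = {E. mtrace (E ** \<rho>s) = mtrace (E ** \<rho>t)}"

lemma mtrace_add: "mtrace ((X + Y) ** \<rho>) = mtrace (X ** \<rho>) + mtrace (Y ** (\<rho>::'n::finite op))"
  by (simp add: mtrace_def matrix_matrix_mult_def distrib_right sum.distrib)

lemma mtrace_scale: "mtrace ((r *\<^sub>R X) ** \<rho>) = r *\<^sub>R mtrace (X ** (\<rho>::'n::finite op))"
  by (simp add: mm_scaleR_l mtrace_def scaleR_sum_right)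

lemma K_subspace: "subspace (K \<rho>s (\<rho>t::'n::finite op))"
proof -
  have "mtrace (0 ** \<rho>) = 0" for \<rho> :: "'n op" by (simp add: mtrace_def)
  then show ?thesis unfolding subspace_def K_def by (simp add: mtrace_add mtrace_scale)
qed

lemma equiv_on_K: "equiv_on U M P \<rho>s \<rho>t \<longleftrightarrow>
   (\<forall>a S b. scheduler a S \<longrightarrow> length b = length S \<longrightarrow> P a S \<longrightarrow> Ef U M a S b \<in> K \<rho>s \<rho>t)"
  by (simp add: equiv_on_def Prob_Ef K_def)

lemma qequiv_K: "qequiv U M \<rho>s \<rho>t \<longleftrightarrow> (\<forall>j l. Eff U M j l \<subseteq> K \<rho>s \<rho>t)"
  unfolding qequiv_def equiv_on_K Eff_def by fastforce

lemma qequiv_k_K: "qequiv_k U M k \<rho>s \<rho>t \<longleftrightarrow> (\<forall>l. Eff U M k l \<subseteq> K \<rho>s \<rho>t)"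
  unfolding qequiv_k_def equiv_on_K Eff_def by fastforce

lemma qequiv_m_K: "qequiv_m U M m \<rho>s \<rho>t \<longleftrightarrow> Eff U M m m \<subseteq> K \<rho>s \<rho>t"
  unfolding qequiv_m_def equiv_on_K Eff_def by fastforce

lemma qequiv_mk_K: "qequiv_mk U M m k \<rho>s \<rho>t \<longleftrightarrow> Eff U M k m \<subseteq> K \<rho>s \<rho>t"
  unfolding qequiv_mk_def equiv_on_K Eff_def by fastforce

lemma Eff_cap: "Eff U M j m \<subseteq> Eff U M m m"
  unfolding Eff_def by fastforce

lemma Z_all:
  fixes U :: "'i \<Rightarrow> 'n::finite op"
  assumes "Eff U M j (CARD('n)^2 - 1) \<subseteq> K \<rho>s \<rho>t"
  shows "Eff U M j l \<subseteq> K \<rho>s \<rho>t"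
  using stab_N[of U M j l] span_minimal[OF assms K_subspace] by blast


theorem theorem1:
  fixes U :: "'i::finite \<Rightarrow> complex^'n::finite^'n"
    and M :: "'o::finite \<Rightarrow> complex^'n^'n"
    and \<rho>s \<rho>t :: "complex^'n^'n"
  assumes "qmm U M" and "density_op \<rho>s" and "density_op \<rho>t"
  defines "n \<equiv> CARD('n)"
  shows "(qequiv U M \<rho>s \<rho>t \<longleftrightarrow> qequiv_m U M (n^2 - 1) \<rho>s \<rho>t)
       \<and> (qequiv_m U M (n^2 - 1) \<rho>s \<rho>t \<longleftrightarrow> qequiv_k U M (n^2 - 1) \<rho>s \<rho>t)
       \<and> (\<forall>k::nat. qequiv_k U M k \<rho>s \<rho>t \<longleftrightarrow> qequiv_mk U M (n^2 - 1) k \<rho>s \<rho>t)"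
proof -
  let ?N = "n^2 - 1"
  have Z: "Eff U M j l \<subseteq> K \<rho>s \<rho>t" if "Eff U M j ?N \<subseteq> K \<rho>s \<rho>t" for j l
    using Z_all[of U M j \<rho>s \<rho>t l] that unfolding n_def by blast
  have mq: "qequiv_m U M ?N \<rho>s \<rho>t \<Longrightarrow> qequiv U M \<rho>s \<rho>t"
  proof -
    assume "qequiv_m U M ?N \<rho>s \<rho>t"
    then have h: "Eff U M ?N ?N \<subseteq> K \<rho>s \<rho>t" by (simp add: qequiv_m_K)
    have "Eff U M j l \<subseteq> K \<rho>s \<rho>t" for j l
      by (rule Z) (use Eff_cap[of U M j ?N] h in blast)
    then show ?thesis by (simp add: qequiv_K)
  qed
  have 1: "qequiv U M \<rho>s \<rho>t \<longleftrightarrow> qequiv_m U M ?N \<rho>s \<rho>t"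
    using mq by (auto simp: qequiv_K qequiv_m_K)
  have 2: "qequiv_m U M ?N \<rho>s \<rho>t \<longleftrightarrow> qequiv_k U M ?N \<rho>s \<rho>t"
  proof
    assume "qequiv_m U M ?N \<rho>s \<rho>t"
    then have "qequiv U M \<rho>s \<rho>t" by (rule mq)
    then show "qequiv_k U M ?N \<rho>s \<rho>t" by (simp add: qequiv_K qequiv_k_K)
  next
    assume "qequiv_k U M ?N \<rho>s \<rho>t"
    then show "qequiv_m U M ?N \<rho>s \<rho>t" by (simp add: qequiv_k_K qequiv_m_K)
  qed
  have 3: "qequiv_k U M k \<rho>s \<rho>t \<longleftrightarrow> qequiv_mk U M ?N k \<rho>s \<rho>t" for k
  proof
    assume "qequiv_k U M k \<rho>s \<rho>t"
    then show "qequiv_mk U M ?N k \<rho>s \<rho>t" by (simp add: qequiv_k_K qequiv_mk_K)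
  next
    assume "qequiv_mk U M ?N k \<rho>s \<rho>t"
    then have "Eff U M k ?N \<subseteq> K \<rho>s \<rho>t" by (simp add: qequiv_mk_K)
    then show "qequiv_k U M k \<rho>s \<rho>t" using Z by (simp add: qequiv_k_K)
  qed
  show ?thesis using 1 2 3 by blast
qed

end
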